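(* For every $\lambda>0$ the real-valued function $x\mapsto K_{ix}(\lambda)$, $x\in\mathbb{R}$, takes negative values. Consequently, for every $\lambda>0$, the function $W_\lambda(m,u)=\frac{\lambda}{\pi}K_{i\lambda u}(\lambda)\exp\!\big(\lambda\sqrt{1-m^2}-\lambda u\arcsin m\big)$, $m\in(-1,1)$, $u\in\mathbb{R}$ (the solution of the exponential-operator construction for $v(m)=\sqrt{1-m^2}$) is not a probability density.
   Context: $K_\nu$ is the modified Bessel function of the second kind, $K_\nu(z)=\frac{\pi}{2}\frac{I_{-\nu}(z)-I_\nu(z)}{\sin(\pi\nu)}$ (extended by continuity), with $I_\nu(z)=\sum_{n\ge0}\frac{(z/2)^{\nu+2n}}{n!\Gamma(n+\nu+1)}$; for real $x$ and $\lambda>0$, $K_{ix}(\lambda)$ is real since $K_\nu=K_{-\nu}$. *)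

theory Defs
  imports "HOL-Analysis.Analysis"
begin

text \<open>Modified Bessel function of the first kind, I_nu(z) = sum_n (z/2)^(nu+2n) / (n! Gamma(n+nu+1)),
  with 1/Gamma written as rGamma (entire, vanishing at the poles of Gamma).\<close>
definition besselI :: "complex \<Rightarrow> complex \<Rightarrow> complex" where
  "besselI \<nu> z = (\<Sum>n. (z / 2) powr (\<nu> + 2 * of_nat n) * rGamma (of_nat n + \<nu> + 1) / fact n)"

definition besselK_raw :: "complex \<Rightarrow> complex \<Rightarrow> complex" where
  "besselK_raw \<nu> z = (of_real pi / 2) * (besselI (- \<nu>) z - besselI \<nu> z) / sin (of_real pi * \<nu>)"

definition besselK :: "complex \<Rightarrow> complex \<Rightarrow> complex" where
  "besselK \<nu> z = (if sin (of_real pi * \<nu>) \<noteq> 0 then besselK_raw \<nu> z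
                    else Lim (at \<nu>) (\<lambda>\<mu>. besselK_raw \<mu> z))"

text \<open>W_lambda(m,u) = lambda/pi K_{i lambda u}(lambda) exp(lambda sqrt(1-m^2) - lambda u arcsin m);
  K_{ix}(lambda) is real for real x, lambda > 0, so we take its real part.\<close>
definition W :: "real \<Rightarrow> real \<Rightarrow> real \<Rightarrow> real" where
  "W l m u = l / pi * Re (besselK (\<i> * complex_of_real (l * u)) (complex_of_real l))
               * exp (l * sqrt (1 - m\<^sup>2) - l * u * arcsin m)"

definition is_prob_density :: "(real \<times> real \<Rightarrow> real) \<Rightarrow> (real \<times> real) set \<Rightarrow> bool" where
  "is_prob_density f S \<longleftrightarrow> (\<forall>p\<in>S. 0 \<le> f p) \<and> (f has_integral 1) S"

end

theory Submission
  imports Defs "HOL-Real_Asymp.Real_Asymp"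
begin

lemma inv_le_ln_diff:
  assumes "N \<ge> (1::nat)"
  shows "1 / real (Suc N) \<le> ln (real (Suc N)) - ln (real N)"
proof -
  have "ln (real N / real (Suc N)) \<le> real N / real (Suc N) - 1"
    using assms by (intro ln_le_minus_one) auto
  also have "\<dots> = - (1 / real (Suc N))" by (simp add: field_simps)
  finally show ?thesis using assms by (simp add: ln_div)
qed

lemma arctan_sum_bound:
  fixes m N :: nat assumes m: "m \<ge> 1" and N: "N \<ge> m"
  shows "(\<Sum>j=1..N. arctan (real m / real j)) \<le> real m * pi/2 + real m * (ln (real N) - ln (real m))"
  using N
proof (induction N rule: dec_induct)
  case base
  have "(\<Sum>j=1..m. arctan (real m / real j)) \<le> (\<Sum>j=1..m. pi/2)"
    by (intro sum_mono less_imp_le arctan_ubound)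
  then show ?case by simp
next
  case (step N)
  have "arctan (real m / real (Suc N)) \<le> real m / real (Suc N)"
    by (intro arctan_le_self) auto
  also have "\<dots> = real m * (1 / real (Suc N))" by simp
  also have "\<dots> \<le> real m * (ln (real (Suc N)) - ln (real N))"
    using step m by (intro mult_left_mono inv_le_ln_diff) auto
  finally show ?case using step by (simp add: algebra_simps)
qed

lemma Im_ln_Gamma_series:
  fixes x :: real assumes "x \<ge> 0" "n > 0"
  shows "Im (ln_Gamma_series (1 + \<i> * of_real x) n) = x * ln (real n) - (\<Sum>j=1..Suc n. arctan (x / real j))"
proof -
  have 1: "Im (Ln (1 + \<i> * of_real x)) = arctan x"
    by (subst Im_Ln_eq) (auto simp: complex_eq_iff)
  have 2: "Im (Ln ((1 + \<i> * of_real x) / of_nat k + 1)) = arctan (x / real (Suc k))" if "k \<ge> 1" for k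
  proof -
    have "(1 + \<i> * of_real x) / of_nat k + 1 = Complex (real (Suc k) / k) (x / k)"
      using that by (simp add: complex_eq_iff field_simps)
    moreover have "(x / k) / (real (Suc k) / k) = x / real (Suc k)" using that by (simp add: field_simps)
    ultimately show ?thesis using that
      by (subst Im_Ln_eq) (auto simp: complex_eq_iff)
  qed
  have 3: "Im ((1 + \<i> * of_real x) * Ln (of_nat n)) = x * ln (real n)"
    using assms by simp
  have "(\<Sum>j=1..Suc n. arctan (x / real j)) = arctan x + (\<Sum>j=Suc 1..Suc n. arctan (x / real j))"
    by (subst sum.atLeast_Suc_atMost) auto
  also have "(\<Sum>j=Suc 1..Suc n. arctan (x / real j)) = (\<Sum>k=1..n. arctan (x / real (Suc k)))"
    by (subst sum.shift_bounds_cl_Suc_ivl) simp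
  finally have 4: "(\<Sum>j=1..Suc n. arctan (x / real j)) = arctan x + (\<Sum>k=1..n. arctan (x / real (Suc k)))" .
  have "Im (\<Sum>k=1..n. Ln ((1 + \<i> * of_real x) / of_nat k + 1)) = (\<Sum>k=1..n. arctan (x / real (Suc k)))"
    by (simp add: Im_sum 2)
  then show ?thesis unfolding ln_Gamma_series_def using 1 3 4 by simp
qed


lemma not_nonpos_Ints_1i: "x \<noteq> 0 \<Longrightarrow> 1 + \<i> * complex_of_real x \<notin> \<int>\<^sub>\<le>\<^sub>0"
  by (auto elim!: nonpos_Ints_cases simp: complex_eq_iff)

lemma Im_ln_Gamma_lower:
  fixes m :: nat assumes m: "m \<ge> 1"
  shows "Im (ln_Gamma (1 + \<i> * of_real (real m))) \<ge> real m * ln (real m) - real m * pi / 2"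
proof -
  let ?z = "1 + \<i> * complex_of_real (real m)"
  have lim1: "(\<lambda>n. Im (ln_Gamma_series ?z n)) \<longlonglongrightarrow> Im (ln_Gamma ?z)"
    using m by (intro tendsto_Im ln_Gamma_complex_LIMSEQ not_nonpos_Ints_1i) auto
  have lim2: "(\<lambda>n. real m * (ln (real (Suc n)) - ln (real n))) \<longlonglongrightarrow> 0"
    by real_asymp
  have lim: "(\<lambda>n. Im (ln_Gamma_series ?z n) + real m * (ln (real (Suc n)) - ln (real n)))
      \<longlonglongrightarrow> Im (ln_Gamma ?z)"
    using tendsto_add[OF lim1 lim2] by simp
  show ?thesis
  proof (rule LIMSEQ_le_const[OF lim], rule exI[of _ m], intro allI impI)
    fix n assume n: "m \<le> n"
    have "(\<Sum>j=1..Suc n. arctan (real m / real j)) \<le> real m * pi/2 + real m * (ln (real (Suc n)) - ln (real m))"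
      using m n by (intro arctan_sum_bound) auto
    moreover have "Im (ln_Gamma_series ?z n) = real m * ln (real n) - (\<Sum>j=1..Suc n. arctan (real m / real j))"
      using m n by (intro Im_ln_Gamma_series) auto
    ultimately show "real m * ln (real m) - real m * pi / 2 \<le> Im (ln_Gamma_series ?z n) + real m * (ln (real (Suc n)) - ln (real n))"
      by (simp add: algebra_simps)
  qed
qed


lemma powr_term:
  fixes l x :: real assumes l: "l > 0"
  shows "(complex_of_real l / 2) powr (\<i> * of_real x + 2 * of_nat n)
       = exp (\<i> * of_real (x * ln (l/2))) * of_real (((l/2)^2)^n)"
proof -
  have e: "complex_of_real l / 2 = of_real (l/2)" by simp
  have "(complex_of_real l / 2) powr (\<i> * of_real x + 2 * of_nat n)
      = exp ((\<i> * of_real x + 2 * of_nat n) * of_real (ln (l/2)))"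
    using l Ln_of_real[of "l/2"] by (simp add: powr_def)
  also have "(\<i> * of_real x + 2 * of_nat n) * complex_of_real (ln (l/2))
      = \<i> * of_real (x * ln (l/2)) + of_nat n * of_real (2 * ln (l/2))"
    by (simp add: algebra_simps)
  also have "exp \<dots> = exp (\<i> * of_real (x * ln (l/2))) * exp (of_real (2 * ln (l/2))) ^ n"
    by (simp add: exp_add exp_of_nat_mult)
  also have "exp (complex_of_real (2 * ln (l/2))) = of_real ((l/2)^2)"
  proof -
    have "exp (2 * ln (l/2)) = (l/2)^2"
      using l ln_realpow[of "l/2" 2] exp_ln[of "(l/2)^2"] by simp
    then show ?thesis by (metis exp_of_real)
  qed
  finally show ?thesis by simp
qed

lemma rGamma_term:
  fixes x :: real assumes x: "x \<noteq> 0"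
  shows "rGamma (of_nat n + \<i> * of_real x + 1) = rGamma (1 + \<i> * of_real x) / pochhammer (1 + \<i> * of_real x) n"
proof -
  have nz: "pochhammer (1 + \<i> * complex_of_real x) n \<noteq> 0"
    unfolding pochhammer_eq_0_iff using x by (auto simp: complex_eq_iff)
  have "rGamma (1 + \<i> * of_real x) = pochhammer (1 + \<i> * of_real x) n * rGamma (1 + \<i> * of_real x + of_nat n)"
    by (rule pochhammer_rGamma)
  then show ?thesis using nz by (simp add: field_simps add_ac)
qed

lemma norm_pochhammer_ge:
  fixes x :: real assumes x: "x > 0"
  shows "norm (pochhammer (1 + \<i> * complex_of_real x) n) \<ge> x ^ n"
proof -
  have "x ^ n = (\<Prod>i\<in>{0..<n}. x)" by simp
  also have "\<dots> \<le> (\<Prod>i\<in>{0..<n}. norm (1 + \<i> * complex_of_real x + of_nat i))"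
  proof (intro prod_mono conjI)
    fix i assume "i \<in> {0..<n}"
    have "x = \<bar>Im (1 + \<i> * complex_of_real x + of_nat i)\<bar>" using x by simp
    also have "\<dots> \<le> norm (1 + \<i> * complex_of_real x + of_nat i)" by (rule abs_Im_le_cmod)
    finally show "x \<le> norm (1 + \<i> * complex_of_real x + of_nat i)" .
  qed (use x in auto)
  also have "\<dots> = norm (pochhammer (1 + \<i> * complex_of_real x) n)"
    by (simp add: pochhammer_prod prod_norm)
  finally show ?thesis .
qed


lemma a_bound:
  fixes l x :: real assumes x: "x > 0" and c: "(l/2)^2 / x \<le> 1/3"
  shows "norm (complex_of_real (((l/2)^2)^n) / (fact n * pochhammer (1 + \<i> * of_real x) n)) \<le> (1/3)^n"
proof -
  let ?c = "(l/2)^2"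
  have p: "norm (pochhammer (1 + \<i> * complex_of_real x) n) \<ge> x ^ n"
    using x by (rule norm_pochhammer_ge)
  have xn: "x ^ n > 0" using x by simp
  have f: "(fact n :: real) \<ge> 1" by simp
  have "norm (complex_of_real (?c^n) / (fact n * pochhammer (1 + \<i> * of_real x) n))
      = ?c^n / (fact n * norm (pochhammer (1 + \<i> * of_real x) n))"
    by (simp add: norm_divide norm_mult del: of_real_power of_real_divide)
  also have "\<dots> \<le> ?c^n / (1 * x^n)"
    using p f xn by (intro divide_left_mono mult_mono) (auto intro!: mult_pos_pos)
  also have "\<dots> = (?c / x)^n" by (simp add: power_divide)
  also have "\<dots> \<le> (1/3)^n" using c x by (intro power_mono) auto
  finally show ?thesis .
qed

lemma besselI_factor:
  fixes l x :: real assumes l: "l > 0" and x: "x > 0" and c: "(l/2)^2 / x \<le> 1/3"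
  defines "a \<equiv> \<lambda>n. complex_of_real (((l/2)^2)^n) / (fact n * pochhammer (1 + \<i> * of_real x) n)"
  defines "E \<equiv> exp (\<i> * of_real (x * ln (l/2)))"
  defines "R \<equiv> rGamma (1 + \<i> * of_real x)"
  shows "summable a" "norm (suminf a - 1) \<le> 1/2"
    "(\<lambda>n. (complex_of_real l / 2) powr (\<i> * of_real x + 2 * of_nat n) * rGamma (of_nat n + \<i> * of_real x + 1) / fact n) = (\<lambda>n. E * R * a n)"
    "besselI (\<i> * of_real x) (of_real l) = E * R * suminf a"
proof -
  have nb: "norm (a n) \<le> (1/3)^n" for n
    unfolding a_def using x c by (rule a_bound)
  show sa: "summable a"
    by (rule summable_comparison_test[OF _ summable_geometric[of "1/3::real"]]) (use nb in auto)
  have sna: "summable (\<lambda>n. norm (a n))"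
    by (rule summable_comparison_test[OF _ summable_geometric[of "1/3::real"]]) (use nb in auto)
  have sn: "summable (\<lambda>n. norm (a (Suc n)))"
    using summable_ignore_initial_segment[OF sna, of 1] by simp
  have a0: "a 0 = 1" by (simp add: a_def)
  have "norm (suminf a - 1) = norm (\<Sum>n. a (Suc n))"
    using suminf_split_head[OF sa] a0 by simp
  also have "\<dots> \<le> (\<Sum>n. norm (a (Suc n)))" by (rule summable_norm[OF sn])
  also have "\<dots> \<le> (\<Sum>n. (1/3::real) * (1/3)^n)"
  proof (intro suminf_le summable_mult summable_geometric sn)
    fix n show "norm (a (Suc n)) \<le> (1/3::real) * (1/3)^n" using nb[of "Suc n"] by simp
  qed auto
  also have "\<dots> = 1/2"
    using suminf_mult[OF summable_geometric[of "1/3::real"], of "1/3"] suminf_geometric[of "1/3::real"] by simp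
  finally show "norm (suminf a - 1) \<le> 1/2" .
  show eq: "(\<lambda>n. (complex_of_real l / 2) powr (\<i> * of_real x + 2 * of_nat n) * rGamma (of_nat n + \<i> * of_real x + 1) / fact n) = (\<lambda>n. E * R * a n)"
  proof
    fix n
    show "(complex_of_real l / 2) powr (\<i> * of_real x + 2 * of_nat n) * rGamma (of_nat n + \<i> * of_real x + 1) / fact n = E * R * a n"
      unfolding powr_term[OF l] rGamma_term[of x n, OF less_imp_neq[OF x, symmetric]] using x
      by (simp add: E_def R_def a_def field_simps)
  qed
  show "besselI (\<i> * of_real x) (of_real l) = E * R * suminf a"
    unfolding besselI_def eq using suminf_mult[OF sa, of "E * R"] by simp
qed


lemma besselI_cnj:
  fixes l x :: real assumes l: "l > 0"
  assumes s: "summable (\<lambda>n. (complex_of_real l / 2) powr (\<i> * of_real x + 2 * of_nat n) * rGamma (of_nat n + \<i> * of_real x + 1) / fact n)"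
  shows "besselI (- (\<i> * of_real x)) (of_real l) = cnj (besselI (\<i> * of_real x) (of_real l))"
proof -
  let ?f = "\<lambda>n. (complex_of_real l / 2) powr (\<i> * of_real x + 2 * of_nat n) * rGamma (of_nat n + \<i> * of_real x + 1) / fact n"
  have t: "(complex_of_real l / 2) powr (- (\<i> * of_real x) + 2 * of_nat n) * rGamma (of_nat n + - (\<i> * of_real x) + 1) / fact n
      = cnj (?f n)" for n
  proof -
    have "cnj ((complex_of_real l / 2) powr (\<i> * of_real x + 2 * of_nat n))
        = cnj (complex_of_real l / 2) powr cnj (\<i> * of_real x + 2 * of_nat n)"
      using l by (intro cnj_powr) auto
    moreover have "cnj (rGamma (of_nat n + \<i> * of_real x + 1)) = rGamma (cnj (of_nat n + \<i> * of_real x + 1))"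
      by (rule cnj_rGamma)
    moreover have "cnj (complex_of_real l / 2) = complex_of_real l / 2" by simp
    moreover have "cnj (\<i> * of_real x + 2 * of_nat n) = - (\<i> * of_real x) + 2 * of_nat n" by simp
    moreover have "cnj (of_nat n + \<i> * of_real x + 1) = of_nat n + - (\<i> * of_real x) + 1" by simp
    moreover have "cnj (fact n :: complex) = fact n" by (simp add: Reals_cnj_iff)
    ultimately show ?thesis by (simp only: complex_cnj_mult complex_cnj_divide)
  qed
  have "(\<lambda>n. cnj (?f n)) sums cnj (suminf ?f)"
    by (rule sums_cnj[THEN iffD2, OF summable_sums[OF s]])
  then show ?thesis unfolding besselI_def t by (rule sums_unique[symmetric])
qed


lemma besselK_eq:
  fixes x l :: real assumes x: "x > 0"
  assumes c: "besselI (- (\<i> * of_real x)) (of_real l) = cnj (besselI (\<i> * of_real x) (of_real l))"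
  defines "s \<equiv> (exp (pi * x) - inverse (exp (pi * x))) / 2"
  shows "s > 0" "besselK (\<i> * of_real x) (of_real l) = of_real (- pi * Im (besselI (\<i> * of_real x) (of_real l)) / s)"
proof -
  have "exp (- (pi * x)) < exp (pi * x)" using x by simp
  then show sp: "s > 0" unfolding s_def by (simp add: exp_minus)
  have "sin (complex_of_real pi * (\<i> * of_real x)) = sin (\<i> * of_real (pi * x))"
    by (simp add: algebra_simps)
  also have "\<dots> = \<i> * ((exp (of_real (pi * x)) - inverse (exp (of_real (pi * x)))) / 2)"
    by (rule sin_i_times)
  also have "\<dots> = \<i> * of_real s"
    unfolding s_def by (simp add: exp_of_real[symmetric] del: exp_of_real)
  finally have sn: "sin (complex_of_real pi * (\<i> * of_real x)) = \<i> * of_real s" .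
  have nz: "sin (complex_of_real pi * (\<i> * of_real x)) \<noteq> 0" using sn sp by simp
  define B where "B = besselI (\<i> * of_real x) (of_real l)"
  have "besselK (\<i> * of_real x) (of_real l) = (of_real pi / 2) * (cnj B - B) / (\<i> * of_real s)"
    unfolding besselK_def besselK_raw_def using nz c sn by (simp add: B_def)
  also have "\<dots> = of_real (- pi * Im B / s)"
  proof -
    have d: "cnj B - B = - 2 * \<i> * of_real (Im B)" by (simp add: complex_eq_iff)
    have "s \<noteq> 0" using sp by simp
    then show ?thesis unfolding d by (simp add: field_simps)
  qed
  finally show "besselK (\<i> * of_real x) (of_real l) = of_real (- pi * Im (besselI (\<i> * of_real x) (of_real l)) / s)"
    by (simp add: B_def)
qed


lemma Im_besselI_pos:
  fixes l :: real assumes l: "l > 0"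
  shows "\<exists>x>0. (l/2)^2 / x \<le> 1/3 \<and> Im (besselI (\<i> * of_real x) (of_real l)) > 0"
proof -
  define c where "c = (l/2)^2"
  define L where "L = ln (l/2)"
  define X where "X = 3 * c + 1"
  define \<theta> where "\<theta> = (\<lambda>x::real. x * L - Im (ln_Gamma (1 + \<i> * complex_of_real x)))"
  have c0: "c \<ge> 0" by (simp add: c_def)
  have X1: "X \<ge> 1" using c0 by (simp add: X_def)
  define N where "N = nat \<lceil>(pi/2 - \<theta> X) / (2*pi)\<rceil>"
  define t where "t = pi/2 - 2 * real N * pi"
  have "(pi/2 - \<theta> X) / (2*pi) \<le> real N" unfolding N_def by linarith
  then have tX: "t \<le> \<theta> X" unfolding t_def using pi_gt_zero by (simp add: field_simps)
  obtain m :: nat where m: "max X (max (exp (L + pi/2 + 1)) (2 * real N * pi)) < real m"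
    using reals_Archimedean2 by blast
  have mX: "X < real m" and me: "exp (L + pi/2 + 1) < real m" and mN: "2 * real N * pi < real m"
    using m by auto
  have m1: "m \<ge> 1" using mX X1 by simp
  have lnm: "L + pi/2 + 1 < ln (real m)"
    using me m1 by (metis exp_gt_zero exp_less_cancel_iff exp_ln less_le_trans of_nat_0_less_iff less_le_trans zero_less_one le_less_trans order.strict_trans1 linorder_not_le not_one_le_zero) 
  have "\<theta> (real m) \<le> real m * L - (real m * ln (real m) - real m * pi / 2)"
    unfolding \<theta>_def using Im_ln_Gamma_lower[OF m1] by simp
  also have "\<dots> = real m * (L + pi/2 - ln (real m))" by (simp add: algebra_simps)
  also have "\<dots> \<le> real m * (-1)"
    using lnm by (intro mult_left_mono) auto
  also have "\<dots> \<le> t" using mN pi_gt_zero unfolding t_def by linarith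
  finally have tm: "\<theta> (real m) \<le> t" .
  have cont: "continuous_on {X..real m} \<theta>"
    unfolding \<theta>_def
    by (intro continuous_intros continuous_on_compose2[OF continuous_on_ln_Gamma_complex[of "{z. Re z > 0}"]])
       (auto simp: complex_nonpos_Reals_iff)
  obtain x where x: "X \<le> x" "x \<le> real m" "\<theta> x = t"
    using IVT2'[of \<theta> "real m" t X, OF tm tX _ cont] mX by auto
  have x0: "x > 0" using x X1 by simp
  have cx: "(l/2)^2 / x \<le> 1/3" using x X_def c_def x0 c0 by (simp add: field_simps)
  define a where "a = (\<lambda>n. complex_of_real (((l/2)^2)^n) / (fact n * pochhammer (1 + \<i> * of_real x) n))"
  define E where "E = exp (\<i> * of_real (x * ln (l/2)))"
  define R where "R = rGamma (1 + \<i> * of_real x)"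
  note F = besselI_factor[OF l x0 cx, folded a_def E_def R_def]
  define G where "G = ln_Gamma (1 + \<i> * complex_of_real x)"
  have R: "R = exp (- G)"
    unfolding R_def G_def rGamma_complex_altdef using not_nonpos_Ints_1i[of x] x0 by simp
  have "E * R = exp (\<i> * of_real (x * L) - G)"
    unfolding E_def R L_def by (simp add: exp_diff exp_minus field_simps)
  also have "\<i> * of_real (x * L) - G = of_real (- Re G) + \<i> * of_real t"
    using x(3) unfolding \<theta>_def G_def by (simp add: complex_eq_iff)
  also have "exp \<dots> = of_real (exp (- Re G)) * cis t"
    by (simp add: exp_add cis_conv_exp exp_of_real[symmetric] exp_diff exp_minus field_simps del: exp_of_real)
  also have "cis t = \<i>"
    unfolding t_def by (simp add: complex_eq_iff cos_diff sin_diff)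
  finally have ER: "E * R = \<i> * of_real (exp (- Re G))" by simp
  have "Re (suminf a) \<ge> 1/2"
  proof -
    have "\<bar>Re (suminf a - 1)\<bar> \<le> 1/2" using abs_Re_le_cmod F(2) order.trans by blast
    then have "- Re (suminf a - 1) \<le> 1/2" by (rule abs_le_D2)
    then show ?thesis by simp
  qed
  then have "Im (besselI (\<i> * of_real x) (of_real l)) > 0"
    unfolding F(4) ER by simp
  then show ?thesis using x0 cx by blast
qed


lemma part1:
  fixes l :: real assumes l: "l > 0"
  shows "\<exists>x::real. besselK (\<i> * complex_of_real x) (complex_of_real l) \<in> \<real> \<and>
                        Re (besselK (\<i> * complex_of_real x) (complex_of_real l)) < 0"
proof -
  obtain x where x0: "x > 0" and cx: "(l/2)^2 / x \<le> 1/3"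
    and pos: "Im (besselI (\<i> * of_real x) (of_real l)) > 0"
    using Im_besselI_pos[OF l] by blast
  note F = besselI_factor[OF l x0 cx]
  have s: "summable (\<lambda>n. (complex_of_real l / 2) powr (\<i> * of_real x + 2 * of_nat n) * rGamma (of_nat n + \<i> * of_real x + 1) / fact n)"
    unfolding F(3) by (intro summable_mult F(1))
  note K0 = besselK_eq[OF x0 besselI_cnj[OF l s]]
  obtain sv :: real where sv: "sv > 0" and
    K: "besselK (\<i> * complex_of_real x) (complex_of_real l) = of_real (- pi * Im (besselI (\<i> * of_real x) (of_real l)) / sv)"
    using K0 by blast
  have "pi * Im (besselI (\<i> * of_real x) (of_real l)) / sv > 0"
    using sv pos by (intro divide_pos_pos mult_pos_pos) auto
  then have "Re (besselK (\<i> * complex_of_real x) (complex_of_real l)) < 0"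
    unfolding K by simp
  moreover have "besselK (\<i> * complex_of_real x) (complex_of_real l) \<in> \<real>"
    unfolding K by simp
  ultimately show ?thesis by blast
qed

theorem mainTheorem9:
  shows "(\<forall>l::real. l > 0 \<longrightarrow>
            (\<exists>x::real. besselK (\<i> * complex_of_real x) (complex_of_real l) \<in> \<real> \<and>
                        Re (besselK (\<i> * complex_of_real x) (complex_of_real l)) < 0))
       \<and> (\<forall>l::real. l > 0 \<longrightarrow>
            \<not> is_prob_density (\<lambda>(m, u). W l m u) ({-1<..<1} \<times> UNIV))"
proof (intro conjI allI impI)
  fix l :: real assume l: "l > 0"
  show "\<exists>x::real. besselK (\<i> * complex_of_real x) (complex_of_real l) \<in> \<real> \<and>
                        Re (besselK (\<i> * complex_of_real x) (complex_of_real l)) < 0"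
    using part1[OF l] .
next
  fix l :: real assume l: "l > 0"
  obtain x where neg: "Re (besselK (\<i> * complex_of_real x) (complex_of_real l)) < 0"
    using part1[OF l] by blast
  have e: "l * (x / l) = x" using l by simp
  have "l * Re (besselK (\<i> * complex_of_real x) (complex_of_real l)) < 0"
    using l neg by (rule mult_pos_neg)
  then have "l * Re (besselK (\<i> * complex_of_real x) (complex_of_real l)) * exp l < 0"
    by (rule mult_neg_pos) simp
  then have "l * Re (besselK (\<i> * complex_of_real x) (complex_of_real l)) * exp l / pi < 0"
    by (rule divide_neg_pos) simp
  then have "W l 0 (x / l) < 0"
    unfolding W_def e by simp
  moreover have "(0::real, x / l) \<in> ({-1<..<1} \<times> (UNIV :: real set))" by simp
  ultimately show "\<not> is_prob_density (\<lambda>(m, u). W l m u) ({-1<..<1} \<times> UNIV)"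
  proof (intro notI)
    assume Wn: "W l 0 (x / l) < 0" and mem: "(0::real, x / l) \<in> ({-1<..<1} \<times> (UNIV :: real set))"
    assume "is_prob_density (\<lambda>(m, u). W l m u) ({-1<..<1} \<times> UNIV)"
    then have "\<forall>p\<in>{-1<..<1} \<times> UNIV. 0 \<le> (\<lambda>(m, u). W l m u) p" unfolding is_prob_density_def by blast
    from this[rule_format, OF mem] have "0 \<le> W l 0 (x / l)" by simp
    with Wn show False by simp
  qed
qed

end
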